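(* Let $D\in\mathcal{O}_d$ be a discriminant and let $(t,u)\in\mathcal{O}_d^2$ satisfy $t^2-Du^2=4$ and $4<|t|<\frac49|u|^2$. Let $\tau\in\mathcal{O}_d/u\mathcal{O}_d$ be the residue class of $\frac{t-\beta u}{2}$, where $\beta,\xi\in\mathcal{O}_d$ are any elements with $D=\beta^2+4\xi$. Then every loxodromic element $B\in\mathrm{SL}_2(\mathcal{O}_d)_\tau[u]$ satisfies $$4\cosh(\ell(B))\ge|t|^2+|t^2-4|.$$ In particular, if a loxodromic element $B\in\mathrm{SL}_2(\mathcal{O}_d)_\tau[u]$ has $\mathrm{tr}(B)=t$, then $\ell(B)$ is the minimum of the translation lengths of loxodromic elements of $\mathrm{SL}_2(\mathcal{O}_d)_\tau[u]$, i.e. $B$ determines a closed geodesic of shortest length in $\mathrm{SL}_2(\mathcal{O}_d)_\tau[u]\backslash\mathbb{H}^3$.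
   Context: $d\in\{1,2,3,7,11,19,43,67,163\}$ (so $k_d=\mathbb{Q}(\sqrt{-d})$ has class number one), $\mathcal{O}_d$ is the ring of integers of $k_d$. An element $D\in\mathcal{O}_d$ is a discriminant if $D$ is not a perfect square in $\mathcal{O}_d$ and $D\equiv x^2\pmod{4\mathcal{O}_d}$ for some $x\in\mathcal{O}_d$; then $D=\beta^2+4\xi$ for some $\beta,\xi\in\mathcal{O}_d$, $\frac{t-\beta u}{2}\in\mathcal{O}_d$, and its class $\tau$ modulo $u\mathcal{O}_d$ is independent of the choice of $\beta,\xi$ and satisfies $\tau^2=1$ in $\mathcal{O}_d/u\mathcal{O}_d$. With $\pi_u:\mathrm{SL}_2(\mathcal{O}_d)\to\mathrm{SL}_2(\mathcal{O}_d/u\mathcal{O}_d)$ the reduction map and $\mathrm{Id}$ the identity matrix, $\mathrm{SL}_2(\mathcal{O}_d)_\tau[u]:=\pi_u^{-1}(\{\mathrm{Id},\tau\,\mathrm{Id}\})$. An element $B\in\mathrm{SL}_2(\mathbb{C})$ is loxodromic if $\mathrm{tr}(B)\notin[-2,2]$, and $\ell(B)$ denotes its translation length along its axis in $\mathbb{H}^3$. *)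

theory Defs
  imports "HOL-Analysis.Analysis"
begin

definition class_number_one_d :: "nat set" where
  "class_number_one_d = {1,2,3,7,11,19,43,67,163}"

text \<open>Generator of the ring of integers of Q(sqrt(-d)), d squarefree positive.\<close>
definition omega_d :: "nat \<Rightarrow> complex" where
  "omega_d d = (if d mod 4 = 3 then (1 + \<i> * complex_of_real (sqrt (real d))) / 2
                else \<i> * complex_of_real (sqrt (real d)))"

definition O_d :: "nat \<Rightarrow> complex set" where
  "O_d d = {of_int a + of_int b * omega_d d | a b. True}"

definition dvdO :: "nat \<Rightarrow> complex \<Rightarrow> complex \<Rightarrow> bool" where
  "dvdO d m x \<longleftrightarrow> (\<exists>y \<in> O_d d. x = m * y)"

definition discriminant :: "nat \<Rightarrow> complex \<Rightarrow> bool" where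
  "discriminant d D \<longleftrightarrow> D \<in> O_d d \<and> \<not> (\<exists>x \<in> O_d d. D = x\<^sup>2) \<and>
     (\<exists>x \<in> O_d d. dvdO d 4 (D - x\<^sup>2))"

definition SL2O :: "nat \<Rightarrow> (complex^2^2) set" where
  "SL2O d = {B. det B = 1 \<and> (\<forall>i j. B $ i $ j \<in> O_d d)}"

text \<open>Congruence subgroup SL_2(O_d)_tau[u] = preimage of {Id, tau Id} under reduction mod u;
  tau is given by a representative c in O_d.\<close>
definition congruent_scalar :: "nat \<Rightarrow> complex \<Rightarrow> complex \<Rightarrow> complex^2^2 \<Rightarrow> bool" where
  "congruent_scalar d u c B \<longleftrightarrow>
     dvdO d u (B $ 1 $ 1 - c) \<and> dvdO d u (B $ 2 $ 2 - c) \<and>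
     dvdO d u (B $ 1 $ 2) \<and> dvdO d u (B $ 2 $ 1)"

definition SL2O_tau :: "nat \<Rightarrow> complex \<Rightarrow> complex \<Rightarrow> (complex^2^2) set" where
  "SL2O_tau d tau u = {B \<in> SL2O d. congruent_scalar d u 1 B \<or> congruent_scalar d u tau B}"

definition loxodromic :: "complex^2^2 \<Rightarrow> bool" where
  "loxodromic B \<longleftrightarrow> \<not> (Im (trace B) = 0 \<and> \<bar>Re (trace B)\<bar> \<le> 2)"

text \<open>Translation length: for B conjugate to diag(lambda, 1/lambda) with |lambda| > 1,
  B acts on H^3 as z \<mapsto> lambda^2 z, so the translation length is 2 ln |lambda|,
  lambda the eigenvalue of largest modulus.\<close>
definition translation_length :: "complex^2^2 \<Rightarrow> real" where
  "translation_length B =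
     2 * ln (Max {cmod lam | lam. lam\<^sup>2 - trace B * lam + det B = 0})"

end

theory Submission
  imports Defs
begin


definition w1 :: "nat \<Rightarrow> int" where "w1 d = (if d mod 4 = 3 then 1 else 0)"
definition w0 :: "nat \<Rightarrow> int" where "w0 d = (if d mod 4 = 3 then - ((int d + 1) div 4) else - int d)"

lemma sqrt_sq_c: "complex_of_real (sqrt (real d)) * complex_of_real (sqrt (real d)) = of_nat d"
proof -
  have "sqrt (real d) * sqrt (real d) = real d" by simp
  then have "complex_of_real (sqrt (real d) * sqrt (real d)) = complex_of_real (real d)" by simp
  then show ?thesis by (simp only: of_real_mult of_real_of_nat_eq)
qed

lemma k_real: assumes "d mod 4 = 3" shows "real_of_int ((int d + 1) div 4) = (real d + 1) / 4"
proof -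
  have "(int d + 1) mod 4 = 0" using assms by presburger
  then have "int d + 1 = 4 * ((int d + 1) div 4)" by presburger
  then have "real_of_int (int d + 1) = 4 * real_of_int ((int d + 1) div 4)" by (metis of_int_mult of_int_numeral)
  then show ?thesis by simp
qed

lemma omega_sq: "(omega_d d)\<^sup>2 = of_int (w1 d) * omega_d d + of_int (w0 d)"
proof (cases "d mod 4 = 3")
  case True
  define S where "S = complex_of_real (sqrt (real d))"
  have SS: "S * S = of_nat d" unfolding S_def by (rule sqrt_sq_c)
  have om: "omega_d d = (1 + \<i> * S) / 2" using True unfolding omega_d_def S_def by simp
  have k: "complex_of_int ((int d + 1) div 4) = (of_nat d + 1) / 4"
  proof -
    have "(int d + 1) mod 4 = 0" using True by presburger
    then have "int d + 1 = 4 * ((int d + 1) div 4)" by presburger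
    then have "complex_of_int (int d + 1) = complex_of_int (4 * ((int d + 1) div 4))" by simp
    then have "of_nat d + 1 = 4 * complex_of_int ((int d + 1) div 4)" by simp
    then show ?thesis by simp
  qed
  have w: "w0 d = - ((int d + 1) div 4)" "w1 d = 1" using True unfolding w0_def w1_def by auto
  have "(omega_d d)\<^sup>2 = (1 + 2 * \<i> * S + \<i> * \<i> * (S * S)) / 4" unfolding om
    by (simp add: power2_eq_square algebra_simps)
  also have "\<dots> = (1 + 2 * \<i> * S - of_nat d) / 4" unfolding SS by simp
  also have "\<dots> = 1 * ((1 + \<i> * S) / 2) - (of_nat d + 1) / 4" by (simp add: field_simps)
  finally have "(omega_d d)\<^sup>2 = 1 * omega_d d - complex_of_int ((int d + 1) div 4)"
    unfolding om k .
  then show ?thesis unfolding w by simp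
next
  case False
  define S where "S = complex_of_real (sqrt (real d))"
  have SS: "S * S = of_nat d" unfolding S_def by (rule sqrt_sq_c)
  have om: "omega_d d = \<i> * S" using False unfolding omega_d_def S_def by simp
  have w: "w0 d = - int d" "w1 d = 0" using False unfolding w0_def w1_def by auto
  have "(omega_d d)\<^sup>2 = \<i> * \<i> * (S * S)" unfolding om by (simp add: power2_eq_square algebra_simps)
  also have "\<dots> = - of_nat d" unfolding SS by simp
  finally show ?thesis unfolding w by simp
qed

lemma Od_iff: "z \<in> O_d d \<longleftrightarrow> (\<exists>a b::int. z = of_int a + of_int b * omega_d d)"
  by (auto simp: O_d_def)

lemma Od_intro: "of_int a + of_int b * omega_d d \<in> O_d d"
  by (auto simp: O_d_def)

lemma Od_add: "x \<in> O_d d \<Longrightarrow> y \<in> O_d d \<Longrightarrow> x + y \<in> O_d d"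
proof -
  assume "x \<in> O_d d" "y \<in> O_d d"
  then obtain a b p q where "x = of_int a + of_int b * omega_d d" "y = of_int p + of_int q * omega_d d"
    unfolding Od_iff by blast
  then have "x + y = of_int (a+p) + of_int (b+q) * omega_d d" by (simp add: algebra_simps)
  then show ?thesis using Od_intro by metis
qed

lemma Od_uminus: "x \<in> O_d d \<Longrightarrow> - x \<in> O_d d"
proof -
  assume "x \<in> O_d d"
  then obtain a b where "x = of_int a + of_int b * omega_d d"
    unfolding Od_iff by blast
  then have "- x = of_int (-a) + of_int (-b) * omega_d d" by (simp add: algebra_simps)
  then show ?thesis using Od_intro by metis
qed

lemma Od_diff: "x \<in> O_d d \<Longrightarrow> y \<in> O_d d \<Longrightarrow> x - y \<in> O_d d"
  using Od_add[of x d "-y"] Od_uminus[of y d] by simp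

lemma Od_mult_coords: "(of_int a + of_int b * omega_d d) * (of_int p + of_int q * omega_d d)
   = of_int (a*p + w0 d * b * q) + of_int (a*q + b*p + w1 d * b * q) * omega_d d"
proof -
  have "(of_int a + of_int b * omega_d d) * (of_int p + of_int q * omega_d d)
     = of_int a * of_int p + (of_int a * of_int q + of_int b * of_int p) * omega_d d + of_int b * of_int q * (omega_d d)\<^sup>2"
    by (simp add: algebra_simps power2_eq_square)
  also have "\<dots> = of_int (a*p + w0 d * b * q) + of_int (a*q + b*p + w1 d * b * q) * omega_d d"
    unfolding omega_sq by (simp add: algebra_simps)
  finally show ?thesis .
qed

lemma Od_mult: "x \<in> O_d d \<Longrightarrow> y \<in> O_d d \<Longrightarrow> x * y \<in> O_d d"
  unfolding Od_iff using Od_mult_coords by blast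

lemma Od_int: "of_int a \<in> O_d d"
  using Od_intro[of a 0 d] by simp

lemma Od_0: "0 \<in> O_d d" using Od_int[of 0 d] by simp
lemma Od_1: "1 \<in> O_d d" using Od_int[of 1 d] by simp

lemma Im_omega: "d > 0 \<Longrightarrow> Im (omega_d d) \<noteq> 0"
  unfolding omega_d_def by auto

lemma coords_unique:
  assumes "d > 0" "of_int a + of_int b * omega_d d = (of_int p + of_int q * omega_d d :: complex)"
  shows "a = p \<and> b = q"
proof -
  have "Im (of_int a + of_int b * omega_d d) = Im (of_int p + of_int q * omega_d d)" using assms by simp
  then have "of_int b * Im (omega_d d) = of_int q * Im (omega_d d)" by simp
  then have "b = q" using Im_omega[OF assms(1)] by simp
  then show ?thesis using assms(2) by simp
qed

lemma norm_coords: "(cmod (of_int a + of_int b * omega_d d))\<^sup>2 = of_int (a*a + w1 d * a * b - w0 d * b * b)"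
proof (cases "d mod 4 = 3")
  case True
  note e = k_real[OF True]
  have re: "Re (of_int a + of_int b * omega_d d) = a + b/2" using True unfolding omega_d_def by simp
  have im: "Im (of_int a + of_int b * omega_d d) = b * sqrt d / 2" using True unfolding omega_d_def by simp
  have w: "w0 d = - ((int d + 1) div 4)" "w1 d = 1" using True unfolding w0_def w1_def by auto
  have "(cmod (of_int a + of_int b * omega_d d))\<^sup>2 = (a + b/2)\<^sup>2 + (b * sqrt d / 2)\<^sup>2"
    unfolding cmod_power2 re im by simp
  also have "\<dots> = a*a + a*b + b*b*((real d + 1)/4)"
    by (simp add: power2_eq_square field_simps)
  also have "\<dots> = of_int (a*a + w1 d * a * b - w0 d * b * b)"
    unfolding w of_int_diff of_int_add of_int_mult of_int_minus e by simp
  finally show ?thesis .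
next
  case False
  have re: "Re (of_int a + of_int b * omega_d d) = a" using False unfolding omega_d_def by simp
  have im: "Im (of_int a + of_int b * omega_d d) = b * sqrt d" using False unfolding omega_d_def by simp
  have w: "w0 d = - int d" "w1 d = 0" using False unfolding w0_def w1_def by auto
  have s: "(b * sqrt d)\<^sup>2 = b*b*real d" by (simp add: power_mult_distrib power2_eq_square)
  have "(cmod (of_int a + of_int b * omega_d d))\<^sup>2 = a*a + b*b*real d"
    unfolding cmod_power2 re im s by (simp add: power2_eq_square)
  moreover have "real_of_int (a*a + w1 d * a * b - w0 d * b * b) = a*a + b*b*real d"
    unfolding w by simp
  ultimately show ?thesis by simp
qed

lemma Od_norm_ge1: assumes "d > 0" "z \<in> O_d d" "z \<noteq> 0" shows "cmod z \<ge> 1"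
proof -
  obtain a b where z: "z = of_int a + of_int b * omega_d d" using assms(2) Od_iff by blast
  define N where "N = a*a + w1 d * a * b - w0 d * b * b"
  have "(cmod z)\<^sup>2 = of_int N" using norm_coords z N_def by simp
  moreover have "cmod z > 0" using assms by simp
  ultimately have "N > 0" by (metis of_int_0_less_iff zero_less_power)
  then have "(cmod z)\<^sup>2 \<ge> 1" using \<open>(cmod z)\<^sup>2 = of_int N\<close> by simp
  then show ?thesis by (metis abs_norm_cancel abs_square_less_1 not_le)
qed



lemma even_sq: "even ((x::int) * x) \<Longrightarrow> even x" by simp

lemma par3:
  fixes x y p q g h k :: int
  assumes "x*x - k*(y*y) + 2*(x*p) - 2*(k*(y*q)) = 4*g"
    and "2*(x*y) + y*y + 2*(x*q) + 2*(y*p) + 2*(y*q) = 4*h"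
  shows "even x \<and> even y"
proof -
  have "y*y = 2*(2*h - x*y - x*q - y*p - y*q)" using assms(2) by (simp add: algebra_simps)
  then have ey: "even y" using even_sq by (metis dvd_triv_left)
  then obtain y' where y: "y = 2*y'" by blast
  have "x*x = 2*(2*g + 2*k*y'*y' - x*p + 2*k*y'*q)" using assms(1) unfolding y by (simp add: algebra_simps)
  then have "even x" using even_sq by (metis dvd_triv_left)
  with ey show ?thesis by simp
qed

lemma par2:
  fixes x y p q g h :: int
  assumes "x*x - 2*(y*y) + 2*(x*p) - 2*(2*(y*q)) = 4*g"
  shows "even x \<and> even y"
proof -
  have "x*x = 2*(2*g + y*y - x*p + 2*y*q)" using assms(1) by (simp add: algebra_simps)
  then have ex: "even x" using even_sq by (metis dvd_triv_left)
  then obtain x' where x: "x = 2*x'" by blast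
  have "y*y = 2*(x'*x' + x'*p - y*q - g)" using assms(1) unfolding x by (simp add: algebra_simps)
  then have "even y" using even_sq by (metis dvd_triv_left)
  with ex show ?thesis by simp
qed

lemma par1:
  fixes x y p q g h :: int
  assumes "x*x - y*y + 2*(x*p) - 2*(y*q) = 4*g"
    and "2*(x*y) + 2*(x*q) + 2*(y*p) = 4*h"
  shows "even x \<and> even y"
proof (rule ccontr)
  assume nn: "\<not> (even x \<and> even y)"
  have "(x - y) * (x + y) = 2*(2*g - x*p + y*q)" using assms(1) by (simp add: algebra_simps)
  then have "even ((x - y) * (x + y))" by simp
  then have "even (x - y) \<or> even (x + y)" by simp
  then have "even (x - y)" by auto
  with nn have ox: "odd x" and oy: "odd y" by auto
  then obtain a b where x: "x = 2*a+1" and y: "y = 2*b+1" by (meson oddE)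
  have "2*(p - q) = 4*(g - a*a - a + b*b + b - a*p + b*q)" using assms(1) unfolding x y by (simp add: algebra_simps)
  then have pq: "p - q = 2*(g - a*a - a + b*b + b - a*p + b*q)" by simp
  define r where "r = g - a*a - a + b*b + b - a*p + b*q"
  have p: "p = q + 2*r" using pq r_def by simp
  have "x*y + (x+y)*q + 2*(y*r) = 2*h" using assms(2) unfolding p by (simp add: algebra_simps)
  moreover have "even (x+y)" using ox oy by simp
  ultimately have xy: "x*y = 2*h - (x+y)*q - 2*(y*r)" and exy: "even (x+y)" by (simp_all add: algebra_simps)
  have "even (2*h - (x+y)*q - 2*(y*r))" using exy by simp
  then have "even (x*y)" by (simp only: xy)
  then show False using ox oy by simp
qed

lemma half_in_Od:
  assumes hd: "d \<in> class_number_one_d" and a: "a \<in> O_d d" and c: "c \<in> O_d d" and w: "w \<in> O_d d"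
    and eq: "a * (a + 2 * c) = 4 * w"
  shows "a / 2 \<in> O_d d"
proof -
  have d0: "d > 0" using hd unfolding class_number_one_d_def by auto
  obtain x y where ax: "a = of_int x + of_int y * omega_d d" using a Od_iff by blast
  obtain p q where cx: "c = of_int p + of_int q * omega_d d" using c Od_iff by blast
  obtain g h where wx: "w = of_int g + of_int h * omega_d d" using w Od_iff by blast
  have ac: "a + 2 * c = of_int (x + 2*p) + of_int (y + 2*q) * omega_d d" unfolding ax cx by (simp add: algebra_simps)
  have "a * (a + 2 * c) = (of_int x + of_int y * omega_d d) * (of_int (x + 2*p) + of_int (y + 2*q) * omega_d d)"
    by (simp only: ac) (simp only: ax)
  also have "\<dots> = of_int (x*(x + 2*p) + w0 d * y * (y + 2*q)) + of_int (x*(y + 2*q) + y*(x + 2*p) + w1 d * y * (y + 2*q)) * omega_d d"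
    by (rule Od_mult_coords)
  finally have "a * (a + 2 * c) = of_int (x*(x + 2*p) + w0 d * y * (y + 2*q)) + of_int (x*(y + 2*q) + y*(x + 2*p) + w1 d * y * (y + 2*q)) * omega_d d" .
  moreover have "4 * w = of_int (4*g) + of_int (4*h) * omega_d d" unfolding wx by (simp add: algebra_simps)
  ultimately have "x*(x + 2*p) + w0 d * y * (y + 2*q) = 4*g \<and> x*(y + 2*q) + y*(x + 2*p) + w1 d * y * (y + 2*q) = 4*h"
    using eq coords_unique[OF d0] by metis
  then have e1: "x*(x + 2*p) + w0 d * y * (y + 2*q) = 4*g" and e2: "x*(y + 2*q) + y*(x + 2*p) + w1 d * y * (y + 2*q) = 4*h" by auto
  have "even x \<and> even y"
  proof (cases "d mod 4 = 3")
    case True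
    then have "w1 d = 1" "w0 d = - ((int d + 1) div 4)" unfolding w1_def w0_def by auto
    then show ?thesis using e1 e2 par3[of x "(int d + 1) div 4" y p q g h] by (simp add: algebra_simps)
  next
    case False
    then have "d = 1 \<or> d = 2" using hd unfolding class_number_one_d_def by auto
    then show ?thesis
    proof
      assume "d = 1"
      then have "w1 d = 0" "w0 d = -1" unfolding w1_def w0_def by auto
      then show ?thesis using e1 e2 par1[of x y p q g h] by (simp add: algebra_simps)
    next
      assume "d = 2"
      then have "w1 d = 0" "w0 d = -2" unfolding w1_def w0_def by auto
      then show ?thesis using e1 par2[of x y p q g] by (simp add: algebra_simps)
    qed
  qed
  then obtain x' y' where "x = 2*x'" "y = 2*y'" by blast
  then have "a / 2 = of_int x' + of_int y' * omega_d d" unfolding ax by simp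
  then show ?thesis using Od_intro by metis
qed



lemma parallelogram_c: "(cmod (z + w))\<^sup>2 + (cmod (z - w))\<^sup>2 = 2 * ((cmod z)\<^sup>2 + (cmod w)\<^sup>2)"
  by (simp only: cmod_power2) (simp add: power2_eq_square algebra_simps)

lemma tl_formula:
  fixes B :: "complex^2^2"
  assumes "det B = 1"
  shows "4 * cosh (translation_length B) = (cmod (trace B))\<^sup>2 + cmod ((trace B)\<^sup>2 - 4)
         \<and> translation_length B \<ge> 0"
proof -
  define T where "T = trace B"
  define r where "r = csqrt (T\<^sup>2 - 4)"
  define l1 where "l1 = (T + r) / 2"
  define l2 where "l2 = (T - r) / 2"
  have r2: "r\<^sup>2 = T\<^sup>2 - 4" unfolding r_def by simp
  have sum: "l1 + l2 = T" unfolding l1_def l2_def by (simp add: field_simps)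
  have prod: "l1 * l2 = 1"
  proof -
    have "l1 * l2 = (T\<^sup>2 - r\<^sup>2) / 4" unfolding l1_def l2_def by (simp add: field_simps power2_eq_square)
    then show ?thesis using r2 by simp
  qed
  have roots: "lam\<^sup>2 - trace B * lam + det B = 0 \<longleftrightarrow> lam = l1 \<or> lam = l2" for lam
  proof -
    have "lam\<^sup>2 - trace B * lam + det B = (lam - l1) * (lam - l2)"
      unfolding assms T_def[symmetric] sum[symmetric]
      using prod by (simp add: power2_eq_square algebra_simps)
    then show ?thesis by simp
  qed
  have S: "{cmod lam | lam. lam\<^sup>2 - trace B * lam + det B = 0} = {cmod l1, cmod l2}"
    unfolding roots by auto
  define a where "a = cmod l1"
  define b where "b = cmod l2"
  have ab: "a * b = 1" unfolding a_def b_def using prod by (metis norm_mult norm_one)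
  have a0: "a > 0" and b0: "b > 0" using ab a_def b_def
    by (metis mult_eq_0_iff norm_ge_zero order_le_less zero_neq_one)+
  define M where "M = max a b"
  have tlM: "translation_length B = 2 * ln M"
    unfolding translation_length_def S M_def a_def b_def by simp
  have M1: "M \<ge> 1"
  proof (rule ccontr)
    assume "\<not> M \<ge> 1"
    then have "a < 1" "b < 1" unfolding M_def by auto
    then have "a * b < 1 * 1" using a0 b0 by (intro mult_strict_mono) auto
    then show False using ab by simp
  qed
  have Mpos: "M > 0" using M1 by simp
  have sq: "M\<^sup>2 + inverse (M\<^sup>2) = a\<^sup>2 + b\<^sup>2"
  proof (cases "a \<le> b")
    case True
    then have "M = b" unfolding M_def by simp
    moreover have "a = inverse b" using ab b0 by (simp add: field_simps)
    ultimately show ?thesis by (simp add: power_inverse)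
  next
    case False
    then have "M = a" unfolding M_def by simp
    moreover have "b = inverse a" using ab a0 by (simp add: field_simps)
    ultimately show ?thesis by (simp add: power_inverse)
  qed
  have "2 * ln M = ln (M\<^sup>2)" using Mpos by (simp add: ln_mult power2_eq_square)
  then have "cosh (translation_length B) = (M\<^sup>2 + inverse (M\<^sup>2)) / 2"
    unfolding tlM using cosh_ln_real[of "M\<^sup>2"] Mpos by simp
  then have "4 * cosh (translation_length B) = 2 * (a\<^sup>2 + b\<^sup>2)" unfolding sq by simp
  also have "\<dots> = (cmod (l1 + l2))\<^sup>2 + (cmod (l1 - l2))\<^sup>2"
    unfolding a_def b_def parallelogram_c ..
  also have "l1 - l2 = r" unfolding l1_def l2_def by (simp add: field_simps)
  also have "(cmod r)\<^sup>2 = cmod (T\<^sup>2 - 4)" unfolding r2[symmetric] by (simp add: norm_power)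
  finally have "4 * cosh (translation_length B) = (cmod T)\<^sup>2 + cmod (T\<^sup>2 - 4)" unfolding sum .
  moreover have "translation_length B \<ge> 0" unfolding tlM using M1 by simp
  ultimately show ?thesis unfolding T_def by simp
qed



lemma f_mono:
  fixes T t :: complex
  assumes "cmod T \<ge> 5/4 * cmod t" "cmod t > 4"
  shows "(cmod t)\<^sup>2 + cmod (t\<^sup>2 - 4) \<le> (cmod T)\<^sup>2 + cmod (T\<^sup>2 - 4)"
proof -
  have "cmod (T\<^sup>2) - cmod (4::complex) \<le> cmod (T\<^sup>2 - 4)" by (rule norm_triangle_ineq2)
  then have h1: "(cmod T)\<^sup>2 - 4 \<le> cmod (T\<^sup>2 - 4)" by (simp add: norm_power)
  have "cmod (t\<^sup>2 - 4) \<le> cmod (t\<^sup>2) + cmod (4::complex)" by (rule norm_triangle_ineq4)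
  then have h2: "cmod (t\<^sup>2 - 4) \<le> (cmod t)\<^sup>2 + 4" by (simp add: norm_power)
  have "(5/4 * cmod t)\<^sup>2 \<le> (cmod T)\<^sup>2" using assms(1) by (intro power_mono) auto
  moreover have "(5/4 * cmod t)\<^sup>2 = 25/16 * (cmod t)\<^sup>2" by (simp add: power2_eq_square)
  ultimately have h3: "25/16 * (cmod t)\<^sup>2 \<le> (cmod T)\<^sup>2" by linarith
  have "4 * 4 < cmod t * cmod t" using assms(2) by (intro mult_strict_mono) auto
  then have h4: "16 < (cmod t)\<^sup>2" by (simp add: power2_eq_square)
  show ?thesis using h1 h2 h3 h4 by linarith
qed

lemma det_tr2:
  fixes B :: "complex^2^2"
  shows "det B = B$1$1 * B$2$2 - B$1$2 * B$2$1" and "trace B = B$1$1 + B$2$2"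
  by (simp_all add: det_2 trace_def sum_2)

theorem proposition4p4:
  fixes d :: nat and D t u \<beta> \<xi> :: complex
  assumes hd: "d \<in> class_number_one_d"
    and hD: "discriminant d D"
    and ht: "t \<in> O_d d" and hu: "u \<in> O_d d"
    and hpell: "t\<^sup>2 - D * u\<^sup>2 = 4"
    and hlow: "4 < cmod t" and hup: "cmod t < 4 / 9 * (cmod u)\<^sup>2"
    and h\<beta>: "\<beta> \<in> O_d d" and h\<xi>: "\<xi> \<in> O_d d"
    and hdec: "D = \<beta>\<^sup>2 + 4 * \<xi>"
  shows "(\<forall>B \<in> SL2O_tau d ((t - \<beta> * u) / 2) u. loxodromic B \<longrightarrow>
            4 * cosh (translation_length B) \<ge> (cmod t)\<^sup>2 + cmod (t\<^sup>2 - 4))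
       \<and> (\<forall>B \<in> SL2O_tau d ((t - \<beta> * u) / 2) u. loxodromic B \<and> trace B = t \<longrightarrow>
            (\<forall>B' \<in> SL2O_tau d ((t - \<beta> * u) / 2) u. loxodromic B' \<longrightarrow>
               translation_length B \<le> translation_length B'))"
proof -
  have d0: "d > 0" using hd unfolding class_number_one_d_def by auto
  have u0: "u \<noteq> 0" using hup hlow by auto
  have uu: "(cmod u)\<^sup>2 > 9/4 * cmod t" using hup by simp
  define \<tau> where "\<tau> = (t - \<beta> * u) / 2"
  have t\<tau>: "t = 2 * \<tau> + \<beta> * u" unfolding \<tau>_def by (simp add: field_simps)
  have pell\<tau>: "\<tau>\<^sup>2 + \<tau> * \<beta> * u - \<xi> * u\<^sup>2 = 1"
  proof -
    have "t\<^sup>2 - (\<beta>\<^sup>2 + 4 * \<xi>) * u\<^sup>2 = 4" using hpell hdec by simp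
    then have "4 * (\<tau>\<^sup>2 + \<tau> * \<beta> * u - \<xi> * u\<^sup>2) = 4 * 1" unfolding t\<tau>
      by (simp add: power2_eq_square algebra_simps)
    then show ?thesis by (metis mult_cancel_left zero_neq_numeral)
  qed
  have \<tau>O: "\<tau> \<in> O_d d"
  proof -
    have a: "t - \<beta> * u \<in> O_d d" using ht h\<beta> hu by (intro Od_diff Od_mult)
    have c: "\<beta> * u \<in> O_d d" using h\<beta> hu by (intro Od_mult)
    have w: "1 + \<xi> * u\<^sup>2 \<in> O_d d" using h\<xi> hu Od_1 by (simp add: power2_eq_square Od_add Od_mult)
    have "(t - \<beta> * u) * ((t - \<beta> * u) + 2 * (\<beta> * u)) = 4 * (1 + \<xi> * u\<^sup>2)"
    proof -
      have "t\<^sup>2 - (\<beta>\<^sup>2 + 4 * \<xi>) * u\<^sup>2 = 4" using hpell hdec by simp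
      then show ?thesis by (simp add: power2_eq_square algebra_simps)
    qed
    from half_in_Od[OF hd a c w this] show ?thesis unfolding \<tau>_def .
  qed
  have detB: "det B = 1" if "B \<in> SL2O_tau d \<tau> u" for B
    using that unfolding SL2O_tau_def SL2O_def by auto
  have key: "trace B = t \<or> cmod (trace B) \<ge> 5/4 * cmod t"
    if B: "B \<in> SL2O_tau d \<tau> u" and lox: "loxodromic B" for B
  proof -
    have det1: "B$1$1 * B$2$2 - B$1$2 * B$2$1 = 1" using detB[OF B] det_tr2(1)[of B] by simp
    have tr: "trace B = B$1$1 + B$2$2" by (rule det_tr2(2))
    from B have "congruent_scalar d u 1 B \<or> congruent_scalar d u \<tau> B" unfolding SL2O_tau_def by auto
    then show ?thesis
    proof
      assume "congruent_scalar d u 1 B"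
      then obtain y1 y2 y3 y4 where y: "y1 \<in> O_d d" "y2 \<in> O_d d" "y3 \<in> O_d d" "y4 \<in> O_d d"
        and e: "B$1$1 - 1 = u * y1" "B$2$2 - 1 = u * y2" "B$1$2 = u * y3" "B$2$1 = u * y4"
        unfolding congruent_scalar_def dvdO_def by blast
      define \<delta> where "\<delta> = y1 * y2 - y3 * y4"
      have \<delta>O: "\<delta> \<in> O_d d" unfolding \<delta>_def using y by (intro Od_diff Od_mult)
      have b: "B$1$1 = 1 + u * y1" "B$2$2 = 1 + u * y2" using e by (simp_all add: algebra_simps)
      have "u * ((y1 + y2) + u * \<delta>) = 0" using det1 unfolding b e(3,4) \<delta>_def
        by (simp add: algebra_simps)
      then have "(y1 + y2) + u * \<delta> = 0" using u0 by simp
      then have s: "y1 + y2 = - u * \<delta>" by (simp add: eq_neg_iff_add_eq_0)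
      have "trace B = 2 + u * (y1 + y2)" unfolding tr b by (simp add: algebra_simps)
      also have "\<dots> = 2 - u\<^sup>2 * \<delta>" unfolding s by (simp add: power2_eq_square)
      finally have T: "trace B = 2 - u\<^sup>2 * \<delta>" .
      have "\<delta> \<noteq> 0"
      proof
        assume "\<delta> = 0"
        then have "trace B = 2" unfolding T by simp
        then show False using lox unfolding loxodromic_def by simp
      qed
      then have "cmod \<delta> \<ge> 1" using Od_norm_ge1[OF d0 \<delta>O] by simp
      have "cmod (u\<^sup>2 * \<delta>) - cmod (2::complex) \<le> cmod (trace B)"
        unfolding T using norm_triangle_ineq3[of "u\<^sup>2 * \<delta>" 2] by (simp add: norm_minus_commute)
      moreover have "cmod (u\<^sup>2 * \<delta>) \<ge> (cmod u)\<^sup>2"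
        using \<open>cmod \<delta> \<ge> 1\<close> by (simp add: norm_mult norm_power mult_le_cancel_left1)
      ultimately have "cmod (trace B) \<ge> (cmod u)\<^sup>2 - 2" by simp
      then show ?thesis using uu hlow by simp
    next
      assume "congruent_scalar d u \<tau> B"
      then obtain y1 y2 y3 y4 where y: "y1 \<in> O_d d" "y2 \<in> O_d d" "y3 \<in> O_d d" "y4 \<in> O_d d"
        and e: "B$1$1 - \<tau> = u * y1" "B$2$2 - \<tau> = u * y2" "B$1$2 = u * y3" "B$2$1 = u * y4"
        unfolding congruent_scalar_def dvdO_def by blast
      define \<delta> where "\<delta> = y1 * y2 - y3 * y4"
      define s where "s = y1 + y2"
      define m where "m = s - \<beta>"
      define n where "n = m * (\<tau> * s + u * \<delta>) - \<tau> * (\<delta> + \<xi>)"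
      have nO: "n \<in> O_d d" unfolding n_def m_def s_def \<delta>_def using y h\<beta> h\<xi> \<tau>O hu
        by (intro Od_diff Od_mult Od_add) auto
      have b: "B$1$1 = \<tau> + u * y1" "B$2$2 = \<tau> + u * y2" using e by (simp_all add: algebra_simps)
      have detl: "\<tau>\<^sup>2 + u * \<tau> * s + u\<^sup>2 * \<delta> = 1" using det1 unfolding b e(3,4) \<delta>_def s_def
        by (simp add: power2_eq_square algebra_simps)
      have "u * (\<tau> * m + u * (\<delta> + \<xi>)) = (\<tau>\<^sup>2 + u * \<tau> * s + u\<^sup>2 * \<delta>) - (\<tau>\<^sup>2 + \<tau> * \<beta> * u - \<xi> * u\<^sup>2)"
        unfolding m_def by (simp add: power2_eq_square algebra_simps)
      also have "\<dots> = 0" using detl pell\<tau> by simp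
      finally have "u * (\<tau> * m + u * (\<delta> + \<xi>)) = 0" .
      then have "\<tau> * m + u * (\<delta> + \<xi>) = 0" using u0 by simp
      then have tm: "\<tau> * m = - u * (\<delta> + \<xi>)" by (simp add: eq_neg_iff_add_eq_0)
      have "m = m * (\<tau>\<^sup>2 + u * \<tau> * s + u\<^sup>2 * \<delta>)" using detl by simp
      also have "\<dots> = \<tau> * (\<tau> * m) + u * (m * (\<tau> * s + u * \<delta>))"
        by (simp add: power2_eq_square algebra_simps)
      also have "\<dots> = u * n" unfolding tm n_def by (simp add: algebra_simps)
      finally have mn: "m = u * n" .
      have "trace B = 2 * \<tau> + u * s" unfolding tr b s_def by (simp add: algebra_simps)
      also have "\<dots> = t + u * m" unfolding t\<tau> m_def by (simp add: algebra_simps)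
      also have "\<dots> = t + u\<^sup>2 * n" unfolding mn by (simp add: power2_eq_square)
      finally have T: "trace B = t + u\<^sup>2 * n" .
      show ?thesis
      proof (cases "n = 0")
        case True
        then show ?thesis unfolding T by simp
      next
        case False
        then have "cmod n \<ge> 1" using Od_norm_ge1[OF d0 nO] by simp
        have "cmod (u\<^sup>2 * n) - cmod t \<le> cmod (trace B)"
          unfolding T using norm_triangle_ineq3[of "u\<^sup>2 * n" "-t"] by (simp add: add.commute)
        moreover have "cmod (u\<^sup>2 * n) \<ge> (cmod u)\<^sup>2"
          using \<open>cmod n \<ge> 1\<close> by (simp add: norm_mult norm_power mult_le_cancel_left1)
        ultimately have "cmod (trace B) \<ge> (cmod u)\<^sup>2 - cmod t" by simp
        then show ?thesis using uu hlow by simp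
      qed
    qed
  qed
  have part1: "4 * cosh (translation_length B) \<ge> (cmod t)\<^sup>2 + cmod (t\<^sup>2 - 4)"
    if B: "B \<in> SL2O_tau d \<tau> u" and lox: "loxodromic B" for B
  proof -
    have eq: "4 * cosh (translation_length B) = (cmod (trace B))\<^sup>2 + cmod ((trace B)\<^sup>2 - 4)"
      using tl_formula[OF detB[OF B]] by simp
    from key[OF B lox] show ?thesis
    proof
      assume "trace B = t" then show ?thesis unfolding eq by simp
    next
      assume "cmod (trace B) \<ge> 5/4 * cmod t"
      from f_mono[OF this hlow] show ?thesis unfolding eq .
    qed
  qed
  have part2: "translation_length B \<le> translation_length B'"
    if B: "B \<in> SL2O_tau d \<tau> u" "loxodromic B" "trace B = t"
      and B': "B' \<in> SL2O_tau d \<tau> u" "loxodromic B'" for B B'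
  proof -
    have eq: "4 * cosh (translation_length B) = (cmod t)\<^sup>2 + cmod (t\<^sup>2 - 4)"
      and nn: "translation_length B \<ge> 0"
      using tl_formula[OF detB[OF B(1)]] B(3) by simp_all
    have nn': "translation_length B' \<ge> 0" using tl_formula[OF detB[OF B'(1)]] by simp
    have "cosh (translation_length B) \<le> cosh (translation_length B')"
      using part1[OF B'] eq by simp
    then show ?thesis using cosh_real_nonneg_le_iff[OF nn nn'] by simp
  qed
  show ?thesis using part1 part2 unfolding \<tau>_def[symmetric] by blast
qed

end
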